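(* Let $\mathcal A,\mathcal B_1,\mathcal B_2$ be finite-dimensional complex Hilbert spaces and $B\in\mathcal B(\mathcal B_2\otimes\mathcal B_1,\mathcal A)$. The map $\mathcal W:\mathcal B(\mathcal A)\to\mathcal B(\mathcal B_2)$, $\mathcal W(A)=\operatorname{Tr}_{\mathcal B_1}[B^\dagger AB]$, is injective if and only if there exists an injective linear map $\mathcal V:\mathcal B(\mathcal A)\to\mathcal B(\mathcal B_2)$ such that $B(\mathcal V(A)\otimes I_{\mathcal B_1})B^\dagger=A$ for all $A\in\mathcal B(\mathcal A)$. In that case $\mathcal W(A)=\operatorname{Tr}_{\mathcal B_1}[B^\dagger B(\mathcal V(A)\otimes I_{\mathcal B_1})B^\dagger B]$ for all $A$.
   Context: $\mathcal B(\mathcal X,\mathcal Y)$ denotes the space of linear operators from $\mathcal X$ to $\mathcal Y$, and $\mathcal B(\mathcal X)=\mathcal B(\mathcal X,\mathcal X)$. $\operatorname{Tr}_{\mathcal B_1}$ denotes the partial trace over $\mathcal B_1$. *)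

theory Defs
  imports "HOL-Analysis.Analysis"
begin

text \<open>Finite-dimensional complex Hilbert spaces are modelled by finite index types
  (orthonormal bases); an operator from a space indexed by 'n to a space indexed by 'm
  is a matrix of type complex^'n^'m. The tensor product B2 \<otimes> B1 is indexed by 'b2 \<times> 'b1.\<close>

definition adj :: "complex^'n^'m \<Rightarrow> complex^'m^'n" where
  "adj M = (\<chi> i j. cnj (M $ j $ i))"

definition ptrace2 :: "complex^('b2 \<times> 'b1::finite)^('b2 \<times> 'b1) \<Rightarrow> complex^'b2^'b2"
  where "ptrace2 X = (\<chi> i j. \<Sum>k\<in>UNIV. X $ (i,k) $ (j,k))"

definition tensor_id :: "complex^'b2^'b2 \<Rightarrow> complex^('b2 \<times> 'b1::finite)^('b2 \<times> 'b1)"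
  where "tensor_id V = (\<chi> p q. V $ fst p $ fst q * (if snd p = snd q then 1 else 0))"

definition mat_scale :: "complex \<Rightarrow> complex^'n^'m \<Rightarrow> complex^'n^'m" where
  "mat_scale c M = (\<chi> i j. c * M $ i $ j)"

definition clinear_op :: "(complex^'n^'m \<Rightarrow> complex^'p^'q) \<Rightarrow> bool" where
  "clinear_op f \<longleftrightarrow> (\<forall>X Y. f (X + Y) = f X + f Y) \<and> (\<forall>c X. f (mat_scale c X) = mat_scale c (f X))"

end

theory Submission
  imports Defs
begin

definition hs :: "complex^'n^'m \<Rightarrow> complex^'n^'m \<Rightarrow> complex" where
  "hs A Y = (\<Sum>i\<in>UNIV. \<Sum>j\<in>UNIV. A$i$j * cnj (Y$i$j))"

lemma sum_pair_UNIV: "(\<Sum>q\<in>(UNIV::('x::finite \<times> 'y::finite) set). f q) = (\<Sum>i\<in>UNIV. \<Sum>k\<in>UNIV. f (i,k))"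
proof -
  have "(\<Sum>q\<in>(UNIV::('x \<times> 'y) set). f q) = (\<Sum>q\<in>UNIV \<times> UNIV. f q)" by simp
  also have "\<dots> = (\<Sum>i\<in>UNIV. \<Sum>k\<in>UNIV. f (i,k))" by (simp add: sum.cartesian_product)
  finally show ?thesis .
qed

lemma swap3: "(\<Sum>x\<in>A. \<Sum>y\<in>B. \<Sum>z\<in>C. f x y z) = (\<Sum>y\<in>B. \<Sum>z\<in>C. \<Sum>x\<in>A. f x y z)"
proof -
  have "(\<Sum>x\<in>A. \<Sum>y\<in>B. \<Sum>z\<in>C. f x y z) = (\<Sum>y\<in>B. \<Sum>x\<in>A. \<Sum>z\<in>C. f x y z)" by (rule sum.swap)
  also have "\<dots> = (\<Sum>y\<in>B. \<Sum>z\<in>C. \<Sum>x\<in>A. f x y z)" by (rule sum.cong[OF refl], rule sum.swap)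
  finally show ?thesis .
qed

lemma swap4: "(\<Sum>x\<in>A. \<Sum>y\<in>B. \<Sum>z\<in>C. \<Sum>w\<in>D. f x y z w) = (\<Sum>y\<in>B. \<Sum>z\<in>C. \<Sum>w\<in>D. \<Sum>x\<in>A. f x y z w)"
proof -
  have "(\<Sum>x\<in>A. \<Sum>y\<in>B. \<Sum>z\<in>C. \<Sum>w\<in>D. f x y z w) = (\<Sum>y\<in>B. \<Sum>x\<in>A. \<Sum>z\<in>C. \<Sum>w\<in>D. f x y z w)" by (rule sum.swap)
  also have "\<dots> = (\<Sum>y\<in>B. \<Sum>z\<in>C. \<Sum>w\<in>D. \<Sum>x\<in>A. f x y z w)" by (rule sum.cong[OF refl], rule swap3)
  finally show ?thesis .
qed

lemma swap5: "(\<Sum>x\<in>A. \<Sum>y\<in>B. \<Sum>z\<in>C. \<Sum>w\<in>D. \<Sum>v\<in>E. f x y z w v) = (\<Sum>y\<in>B. \<Sum>z\<in>C. \<Sum>w\<in>D. \<Sum>v\<in>E. \<Sum>x\<in>A. f x y z w v)"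
proof -
  have "(\<Sum>x\<in>A. \<Sum>y\<in>B. \<Sum>z\<in>C. \<Sum>w\<in>D. \<Sum>v\<in>E. f x y z w v) = (\<Sum>y\<in>B. \<Sum>x\<in>A. \<Sum>z\<in>C. \<Sum>w\<in>D. \<Sum>v\<in>E. f x y z w v)" by (rule sum.swap)
  also have "\<dots> = (\<Sum>y\<in>B. \<Sum>z\<in>C. \<Sum>w\<in>D. \<Sum>v\<in>E. \<Sum>x\<in>A. f x y z w v)" by (rule sum.cong[OF refl], rule swap4)
  finally show ?thesis .
qed

lemma mm_entry: "((M::'x::semiring_1^'n^'m) ** N) $ a $ b = (\<Sum>p\<in>UNIV. M$a$p * N$p$b)"
  by (simp add: matrix_matrix_mult_def)

lemma BT:
  fixes B :: "complex^('b2::finite \<times> 'b1::finite)^('a::finite)"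
  shows "(B ** (tensor_id X :: complex^('b2 \<times> 'b1)^('b2 \<times> 'b1))) $ a $ (j,k) = (\<Sum>i\<in>UNIV. B$a$(i,k) * X$i$j)"
  unfolding matrix_matrix_mult_def tensor_id_def
  apply (simp only: vec_lambda_beta sum_pair_UNIV fst_conv snd_conv)
  apply (rule sum.cong[OF refl])
  apply (simp add: if_distrib cong: if_cong)
  done

lemma BTB:
  fixes B :: "complex^('b2::finite \<times> 'b1::finite)^('a::finite)"
  shows "(B ** (tensor_id X :: complex^('b2 \<times> 'b1)^('b2 \<times> 'b1)) ** adj B) $ a $ b = (\<Sum>j\<in>UNIV. \<Sum>k\<in>UNIV. \<Sum>i\<in>UNIV. B$a$(i,k) * X$i$j * cnj (B$b$(j,k)))"
  apply (simp only: mm_entry[of _ "adj B"] sum_pair_UNIV BT)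
  apply (simp add: adj_def sum_distrib_right)
  done

lemma key:
  fixes B :: "complex^('b2::finite \<times> 'b1::finite)^('a::finite)"
  shows "hs (ptrace2 (adj B ** A ** B)) X = hs A (B ** (tensor_id X :: complex^('b2 \<times> 'b1)^('b2 \<times> 'b1)) ** adj B)"
proof -
  have L: "hs (ptrace2 (adj B ** A ** B)) X = (\<Sum>i\<in>UNIV. \<Sum>j\<in>UNIV. \<Sum>k\<in>UNIV. \<Sum>b\<in>UNIV. \<Sum>a\<in>UNIV. A$a$b * cnj (B$a$(i,k)) * B$b$(j,k) * cnj (X$i$j))"
    unfolding hs_def ptrace2_def
    apply (simp add: mm_entry adj_def sum_distrib_right sum_distrib_left)
    by (simp add: ac_simps)
  have R: "hs A (B ** (tensor_id X :: complex^('b2 \<times> 'b1)^('b2 \<times> 'b1)) ** adj B) = (\<Sum>a\<in>UNIV. \<Sum>b\<in>UNIV. \<Sum>j\<in>UNIV. \<Sum>k\<in>UNIV. \<Sum>i\<in>UNIV. A$a$b * cnj (B$a$(i,k)) * B$b$(j,k) * cnj (X$i$j))"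
    unfolding hs_def BTB
    by (simp add: sum_distrib_left ac_simps)
  have "(\<Sum>a\<in>UNIV. \<Sum>b\<in>UNIV. \<Sum>j\<in>UNIV. \<Sum>k\<in>UNIV. \<Sum>i\<in>UNIV. A$a$b * cnj (B$a$(i,k)) * B$b$(j,k) * cnj (X$i$j)) = (\<Sum>b\<in>UNIV. \<Sum>j\<in>UNIV. \<Sum>k\<in>UNIV. \<Sum>i\<in>UNIV. \<Sum>a\<in>UNIV. A$a$b * cnj (B$a$(i,k)) * B$b$(j,k) * cnj (X$i$j))" by (rule swap5)
  also have "\<dots> = (\<Sum>j\<in>UNIV. \<Sum>k\<in>UNIV. \<Sum>i\<in>UNIV. \<Sum>b\<in>UNIV. \<Sum>a\<in>UNIV. A$a$b * cnj (B$a$(i,k)) * B$b$(j,k) * cnj (X$i$j))" by (rule swap4)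
  also have "\<dots> = (\<Sum>i\<in>UNIV. \<Sum>j\<in>UNIV. \<Sum>k\<in>UNIV. \<Sum>b\<in>UNIV. \<Sum>a\<in>UNIV. A$a$b * cnj (B$a$(i,k)) * B$b$(j,k) * cnj (X$i$j))" by (rule swap3[symmetric])
  finally show ?thesis using L R by simp
qed


lemma inner_hs: "inner (A::complex^'n^'m) Y = Re (hs A Y)"
  by (simp add: inner_vec_def hs_def inner_complex_def Re_sum)

lemma ms_vs: "vector_space (mat_scale :: complex \<Rightarrow> complex^'n^'m \<Rightarrow> complex^'n^'m)"
  by unfold_locales (simp_all add: mat_scale_def vec_eq_iff algebra_simps)

lemma scaleR_ms: "r *\<^sub>R (M::complex^'n^'m) = mat_scale (of_real r) M"
  by (simp add: mat_scale_def vec_eq_iff of_real_def)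

lemma tensor_add: "(tensor_id (X + Y) :: complex^('b2::finite \<times> 'b1::finite)^('b2 \<times> 'b1)) = tensor_id X + tensor_id Y"
  by (simp add: tensor_id_def vec_eq_iff algebra_simps)

lemma tensor_ms: "(tensor_id (mat_scale c X) :: complex^('b2::finite \<times> 'b1::finite)^('b2 \<times> 'b1)) = mat_scale c (tensor_id X)"
  by (simp add: tensor_id_def mat_scale_def vec_eq_iff algebra_simps)

lemma mm_ms_left: "(mat_scale c M :: complex^'n^'m) ** N = mat_scale c (M ** N)"
  by (simp add: mm_entry mat_scale_def vec_eq_iff sum_distrib_left algebra_simps)

lemma mm_ms_right: "(M :: complex^'n^'m) ** mat_scale c N = mat_scale c (M ** N)"
  by (simp add: mm_entry mat_scale_def vec_eq_iff sum_distrib_left algebra_simps)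

lemma mm_add_left: "((M1 :: complex^'n^'m) + M2) ** N = M1 ** N + M2 ** N"
  by (simp add: mm_entry vec_eq_iff sum.distrib algebra_simps)

lemma mm_add_right: "(M :: complex^'n^'m) ** (N1 + N2) = M ** N1 + M ** N2"
  by (simp add: mm_entry vec_eq_iff sum.distrib algebra_simps)

lemma Phi_clinear:
  fixes B :: "complex^('b2::finite \<times> 'b1::finite)^('a::finite)"
  shows "Vector_Spaces.linear mat_scale mat_scale (\<lambda>X::complex^'b2^'b2. B ** (tensor_id X :: complex^('b2 \<times> 'b1)^('b2 \<times> 'b1)) ** adj B)"
  unfolding Vector_Spaces.linear_iff
  by (simp add: ms_vs tensor_add tensor_ms mm_ms_left mm_ms_right mm_add_left mm_add_right)

lemma Phi_linear:
  fixes B :: "complex^('b2::finite \<times> 'b1::finite)^('a::finite)"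
  shows "linear (\<lambda>X::complex^'b2^'b2. B ** (tensor_id X :: complex^('b2 \<times> 'b1)^('b2 \<times> 'b1)) ** adj B)"
  by (rule linearI) (simp_all add: scaleR_ms tensor_add tensor_ms mm_ms_left mm_ms_right mm_add_left mm_add_right)

lemma adjoint_rel:
  fixes B :: "complex^('b2::finite \<times> 'b1::finite)^('a::finite)"
  shows "inner (ptrace2 (adj B ** A ** B)) X = inner A (B ** (tensor_id X :: complex^('b2 \<times> 'b1)^('b2 \<times> 'b1)) ** adj B)"
  unfolding inner_hs key[of B A X] ..

lemma W_zero:
  fixes B :: "complex^('b2::finite \<times> 'b1::finite)^('a::finite)"
  shows "(ptrace2 (adj B ** (0::complex^'a^'a) ** B) :: complex^'b2^'b2) = 0"
  by (simp add: ptrace2_def mm_entry vec_eq_iff)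


theorem corollary2:
  fixes B :: "complex^('b2::finite \<times> 'b1::finite)^('a::finite)"
  defines "W \<equiv> (\<lambda>A :: complex^'a^'a. ptrace2 (adj B ** A ** B) :: complex^'b2^'b2)"
  shows "(inj W \<longleftrightarrow>
           (\<exists>V :: complex^'a^'a \<Rightarrow> complex^'b2^'b2.
              clinear_op V \<and> inj V \<and>
              (\<forall>A. B ** (tensor_id (V A) :: complex^('b2 \<times> 'b1)^('b2 \<times> 'b1)) ** adj B = A)))
       \<and> (inj W \<longrightarrow>
           (\<forall>V :: complex^'a^'a \<Rightarrow> complex^'b2^'b2.
              clinear_op V \<and> inj V \<and>
              (\<forall>A. B ** (tensor_id (V A) :: complex^('b2 \<times> 'b1)^('b2 \<times> 'b1)) ** adj B = A)
              \<longrightarrow> (\<forall>A. W A = ptrace2 (adj B ** B ** (tensor_id (V A) :: complex^('b2 \<times> 'b1)^('b2 \<times> 'b1)) ** adj B ** B))))"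
proof -
  define P where "P \<equiv> (\<lambda>X::complex^'b2^'b2. B ** (tensor_id X :: complex^('b2 \<times> 'b1)^('b2 \<times> 'b1)) ** adj B)"
  have rel: "inner (W A) X = inner A (P X)" for A X
    unfolding W_def P_def by (rule adjoint_rel)
  have W0: "W 0 = 0" unfolding W_def by (rule W_zero)
  have lin: "linear P" unfolding P_def by (rule Phi_linear)
  have clin: "Vector_Spaces.linear mat_scale mat_scale P" unfolding P_def by (rule Phi_clinear)
  have fwd: "\<exists>V. clinear_op V \<and> inj V \<and> (\<forall>A. P (V A) = A)" if injW: "inj W"
  proof -
    have surjP: "surj P"
    proof (rule ccontr)
      assume ns: "\<not> surj P"
      have sp: "span (range P) = range P"
        using span_linear_image[OF lin, of UNIV] by simp
      have "dim (range P) \<noteq> DIM(complex^'a^'a)"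
        using dim_eq_full[of "range P"] sp ns by simp
      moreover have "dim (range P) \<le> DIM(complex^'a^'a)"
        by (metis dim_subset_UNIV dim_UNIV dim_subset subset_UNIV)
      ultimately have "dim (range P) < DIM(complex^'a^'a)" by simp
      then obtain A where A0: "A \<noteq> 0" and orth: "\<And>y. y \<in> span (range P) \<Longrightarrow> orthogonal A y"
        by (rule orthogonal_to_subspace_exists) blast
      have "inner (W A) (W A) = 0"
        using rel[of A "W A"] orth[of "P (W A)"] sp by (simp add: orthogonal_def)
      then have "W A = W 0" using W0 by simp
      then show False using injW A0 by (simp add: inj_eq)
    qed
    obtain g where glin: "Vector_Spaces.linear mat_scale mat_scale g" and gP: "P \<circ> g = id"
      using vector_space_pair.linear_surjective_right_inverse[OF _ clin surjP]
      using ms_vs[where 'n='b2 and 'm='b2] ms_vs[where 'n='a and 'm='a]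
      unfolding vector_space_pair_def by blast
    have gA: "P (g A) = A" for A using gP by (simp add: fun_eq_iff)
    have "clinear_op g"
      using glin unfolding Vector_Spaces.linear_iff clinear_op_def by blast
    moreover have "inj g" by (metis gA injI)
    ultimately show ?thesis using gA by blast
  qed
  have bwd: "inj W" if V: "\<forall>A. P (V A) = A" for V
  proof (rule injI)
    fix A1 A2 assume eq: "W A1 = W A2"
    have "inner (A1 - A2) (P X) = 0" for X
      using rel[of A1 X] rel[of A2 X] eq by (simp add: inner_diff_left)
    from this[of "V (A1 - A2)"] V have "inner (A1 - A2) (A1 - A2) = 0" by simp
    then show "A1 = A2" by simp
  qed
  have second: "W A = ptrace2 (adj B ** B ** (tensor_id (V A) :: complex^('b2 \<times> 'b1)^('b2 \<times> 'b1)) ** adj B ** B)"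
    if V: "\<forall>A. P (V A) = A" for V A
  proof -
    have "W A = W (P (V A))" using V by simp
    then show ?thesis unfolding W_def P_def by (simp add: matrix_mul_assoc)
  qed
  show ?thesis
    using fwd bwd second unfolding P_def by blast
qed

end
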